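(* Let $S$ and $T$ be pointed sets and $n\in\mathbb{N}$. There is a bijection $\mathrm{Hist}^n(S,T)\cong\mathrm{Hist}^n_{strm}(S,T)$.
   Context: For a set $S$, $\mathrm{List}(S)=\coprod_{t\in\mathbb{N}}S^t$ is the set of finite lists (length $|\ell|=t\geq0$); for $|\ell|\geq1$, $\partial\ell$ drops the last entry. An $n$-historical propagator from $S$ to $T$ is a function $f\colon\mathrm{List}(S)\to\mathrm{List}(T)$ with $|f(\ell)|=|\ell|+n$ for all $\ell$ and $\partial f(\ell)=f(\partial\ell)$ whenever $|\ell|\geq1$; $\mathrm{Hist}^n(S,T)$ is the set of these. An $S$-stream is a function $\sigma\colon\mathbb{N}_{\geq1}\to S$; $\mathrm{Strm}(S)$ is the set of $S$-streams, and for $t\in\mathbb{N}$, $\sigma|_t\in\mathrm{List}(S)$ is the list $[\sigma(1),\dots,\sigma(t)]$. A function $F\colon\mathrm{Strm}(S)\to\mathrm{Strm}(T)$ is an $n$-historical stream propagator if for all $t\in\mathbb{N}$ and all $\sigma,\sigma'\in\mathrm{Strm}(S)$ with $\sigma|_t=\sigma'|_t$ one has $F(\sigma)|_{t+n}=F(\sigma')|_{t+n}$; $\mathrm{Hist}^n_{strm}(S,T)$ is the set of these. *)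

theory Defs
  imports "HOL-Library.FuncSet"
begin

text \<open>S-streams: functions on the positive naturals with values in S
 (extensional: value undefined at 0).\<close>
definition Strm :: "'a set \<Rightarrow> (nat \<Rightarrow> 'a) set" where
  "Strm S = {1..} \<rightarrow>\<^sub>E S"

definition trunc :: "(nat \<Rightarrow> 'a) \<Rightarrow> nat \<Rightarrow> 'a list" where
  "trunc \<sigma> t = map \<sigma> [1..<Suc t]"

definition Hist :: "nat \<Rightarrow> 'a set \<Rightarrow> 'b set \<Rightarrow> ('a list \<Rightarrow> 'b list) set" where
  "Hist n S T = {f \<in> lists S \<rightarrow>\<^sub>E lists T.
      (\<forall>l \<in> lists S. length (f l) = length l + n) \<and>
      (\<forall>l \<in> lists S. l \<noteq> [] \<longrightarrow> butlast (f l) = f (butlast l))}"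

definition Hist_strm :: "nat \<Rightarrow> 'a set \<Rightarrow> 'b set \<Rightarrow> ((nat \<Rightarrow> 'a) \<Rightarrow> (nat \<Rightarrow> 'b)) set" where
  "Hist_strm n S T = {F \<in> Strm S \<rightarrow>\<^sub>E Strm T.
      \<forall>t \<sigma> \<sigma>'. \<sigma> \<in> Strm S \<longrightarrow> \<sigma>' \<in> Strm S \<longrightarrow> trunc \<sigma> t = trunc \<sigma>' t
        \<longrightarrow> trunc (F \<sigma>) (t + n) = trunc (F \<sigma>') (t + n)}"

end

theory Submission
  imports Defs
begin

lemma trunc_len[simp]: "length (trunc s t) = t"
  by (simp add: trunc_def)

lemma trunc_nth[simp]: "i < t \<Longrightarrow> trunc s t ! i = s (Suc i)"
  by (simp add: trunc_def nth_upt del: upt_Suc)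

lemma trunc_eq_iff: "trunc s t = trunc s' t \<longleftrightarrow> (\<forall>k. 1 \<le> k \<and> k \<le> t \<longrightarrow> s k = s' k)"
  unfolding trunc_def map_eq_conv by (auto simp del: upt_Suc)

lemma trunc_take: "m \<le> M \<Longrightarrow> trunc s m = take m (trunc s M)"
  by (rule nth_equalityI) auto

lemma trunc_lists: "s \<in> Strm S \<Longrightarrow> trunc s t \<in> lists S"
  unfolding trunc_def Strm_def by (auto simp del: upt_Suc simp: PiE_def Pi_def)

definition ext :: "'a \<Rightarrow> 'a list \<Rightarrow> nat \<Rightarrow> 'a" where
  "ext s0 l = (\<lambda>k\<in>{1..}. if k \<le> length l then l ! (k - 1) else s0)"

lemma ext_Strm: "s0 \<in> S \<Longrightarrow> l \<in> lists S \<Longrightarrow> ext s0 l \<in> Strm S"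
  unfolding ext_def Strm_def by (auto simp: PiE_def Pi_def)

lemma trunc_ext: "trunc (ext s0 l) (length l) = l"
  by (rule nth_equalityI) (auto simp: ext_def)

lemma Hist_len: "f \<in> Hist n S T \<Longrightarrow> l \<in> lists S \<Longrightarrow> length (f l) = length l + n"
  unfolding Hist_def by blast

lemma Hist_butlast: "f \<in> Hist n S T \<Longrightarrow> l \<in> lists S \<Longrightarrow> l \<noteq> [] \<Longrightarrow> butlast (f l) = f (butlast l)"
  unfolding Hist_def by blast

lemma Hist_prefix:
  assumes f: "f \<in> Hist n S T"
  shows "l \<in> lists S \<Longrightarrow> m \<le> length l \<Longrightarrow> f (take m l) = take (m + n) (f l)"
proof (induction l arbitrary: m rule: rev_induct)
  case Nil
  have "length (f []) = n" using Hist_len[OF f, of "[]"] by simp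
  then show ?case using Nil by simp
next
  case (snoc x l)
  have lS: "l \<in> lists S" using snoc.prems by auto
  have len: "length (f (l @ [x])) = length l + 1 + n" using Hist_len[OF f snoc.prems(1)] by simp
  have "butlast (f (l @ [x])) = f (butlast (l @ [x]))" using Hist_butlast[OF f snoc.prems(1)] by simp
  hence b: "f l = butlast (f (l @ [x]))" by simp
  hence b2: "f l = take (length l + n) (f (l @ [x]))" using len by (simp add: butlast_conv_take)
  show ?case
  proof (cases "m = length l + 1")
    case True
    then show ?thesis using len by simp
  next
    case False
    hence m: "m \<le> length l" using snoc.prems by simp
    have "f (take m (l @ [x])) = f (take m l)" using m by simp
    also have "\<dots> = take (m + n) (f l)" using snoc.IH[OF lS m] .
    also have "\<dots> = take (m + n) (f (l @ [x]))" using b2 m by (simp add: min_def)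
    finally show ?thesis .
  qed
qed

lemma Hist_lists: "f \<in> Hist n S T \<Longrightarrow> l \<in> lists S \<Longrightarrow> f l \<in> lists T"
  by (auto simp add: Hist_def)

lemma Hist_nth:
  assumes f: "f \<in> Hist n S T" and s: "s \<in> Strm S" and k: "1 \<le> k" "k \<le> t + n"
  shows "f (trunc s k) ! (k - 1) = f (trunc s t) ! (k - 1)"
proof (cases "k \<le> t")
  case True
  have "k \<le> length (trunc s t)" using True by simp
  hence "f (take k (trunc s t)) = take (k + n) (f (trunc s t))"
    by (rule Hist_prefix[OF f trunc_lists[OF s]])
  hence "f (trunc s k) = take (k + n) (f (trunc s t))" using trunc_take[OF True, of s] by metis
  then show ?thesis using k by simp
next
  case False
  have "t \<le> length (trunc s k)" using False by simp
  hence "f (take t (trunc s k)) = take (t + n) (f (trunc s k))"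
    by (rule Hist_prefix[OF f trunc_lists[OF s]])
  moreover have "trunc s t = take t (trunc s k)" using False trunc_take[of t k] by simp
  ultimately have "f (trunc s t) = take (t + n) (f (trunc s k))" by metis
  then show ?thesis using k by simp
qed

definition Phi :: "nat \<Rightarrow> 'a set \<Rightarrow> ('a list \<Rightarrow> 'b list) \<Rightarrow> (nat \<Rightarrow> 'a) \<Rightarrow> nat \<Rightarrow> 'b" where
  "Phi n S f = (\<lambda>s\<in>Strm S. \<lambda>k\<in>{1..}. f (trunc s k) ! (k - 1))"

definition Psi :: "nat \<Rightarrow> 'a set \<Rightarrow> 'a \<Rightarrow> ((nat \<Rightarrow> 'a) \<Rightarrow> nat \<Rightarrow> 'b) \<Rightarrow> 'a list \<Rightarrow> 'b list" where
  "Psi n S s0 F = (\<lambda>l\<in>lists S. trunc (F (ext s0 l)) (length l + n))"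

lemma Phi_trunc:
  assumes f: "f \<in> Hist n S T" and s: "s \<in> Strm S"
  shows "trunc (Phi n S f s) (t + n) = f (trunc s t)"
proof (rule nth_equalityI)
  show "length (trunc (Phi n S f s) (t + n)) = length (f (trunc s t))"
    using Hist_len[OF f trunc_lists[OF s]] by simp
next
  fix i assume "i < length (trunc (Phi n S f s) (t + n))"
  hence i: "i < t + n" by simp
  show "trunc (Phi n S f s) (t + n) ! i = f (trunc s t) ! i"
    using i s Hist_nth[OF f s, of "Suc i" t] by (simp add: Phi_def)
qed

lemma Phi_in:
  assumes f: "f \<in> Hist n S T"
  shows "Phi n S f \<in> Hist_strm n S T"
proof -
  have A: "Phi n S f s \<in> Strm T" if s: "s \<in> Strm S" for s
  proof -
    have V: "f (trunc s k) ! (k - Suc 0) \<in> T" if "Suc 0 \<le> k" for k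
    proof -
      have "f (trunc s k) \<in> lists T" using Hist_lists[OF f trunc_lists[OF s]] .
      moreover have "k - 1 < length (f (trunc s k))" using Hist_len[OF f trunc_lists[OF s]] that by simp
      ultimately show ?thesis using in_listsD[rule_format, OF _ nth_mem] by simp
    qed
    have e: "Phi n S f s = (\<lambda>k\<in>{1..}. f (trunc s k) ! (k - 1))" using s unfolding Phi_def by (rule restrict_apply')
    show ?thesis unfolding e Strm_def
      by (rule PiE_I) (auto intro: V)
  qed
  have D: "Phi n S f s = undefined" if "s \<notin> Strm S" for s
    using that unfolding Phi_def by simp
  have C: "trunc (Phi n S f s) (t + n) = trunc (Phi n S f s') (t + n)"
    if "s \<in> Strm S" "s' \<in> Strm S" "trunc s t = trunc s' t" for t s s'
  proof -
    have "trunc (Phi n S f s) (t + n) = f (trunc s t)" by (rule Phi_trunc[OF f that(1)])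
    also have "\<dots> = f (trunc s' t)" using that(3) by simp
    also have "\<dots> = trunc (Phi n S f s') (t + n)" by (rule Phi_trunc[OF f that(2), symmetric])
    finally show ?thesis .
  qed
  have "Phi n S f \<in> Strm S \<rightarrow>\<^sub>E Strm T" using A D by (intro PiE_I) auto
  then show ?thesis unfolding Hist_strm_def mem_Collect_eq
    apply (intro conjI allI impI)
     apply assumption
    apply (rule C)
      apply assumption+
    done
qed

lemma Hs_Strm: "F \<in> Hist_strm n S T \<Longrightarrow> s \<in> Strm S \<Longrightarrow> F s \<in> Strm T"
  by (auto simp: Hist_strm_def)

lemma Hs_ext: "F \<in> Hist_strm n S T \<Longrightarrow> s \<notin> Strm S \<Longrightarrow> F s = undefined"
  unfolding Hist_strm_def by (blast intro: PiE_arb)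

lemma Hs_caus: "F \<in> Hist_strm n S T \<Longrightarrow> s \<in> Strm S \<Longrightarrow> s' \<in> Strm S \<Longrightarrow> trunc s t = trunc s' t
   \<Longrightarrow> trunc (F s) (t + n) = trunc (F s') (t + n)"
  unfolding Hist_strm_def by blast

lemma Psi_in:
  assumes F: "F \<in> Hist_strm n S T" and s0: "s0 \<in> S"
  shows "Psi n S s0 F \<in> Hist n S T"
proof -
  have A: "Psi n S s0 F l \<in> lists T" if l: "l \<in> lists S" for l
  proof -
    have "F (ext s0 l) \<in> Strm T" using Hs_Strm[OF F ext_Strm[OF s0 l]] .
    then show ?thesis using l unfolding Psi_def by (simp add: trunc_lists)
  qed
  have B: "butlast (Psi n S s0 F l) = Psi n S s0 F (butlast l)"
    if l: "l \<in> lists S" "l \<noteq> []" for l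
  proof -
    have bl: "butlast l \<in> lists S" using l by (auto dest: in_set_butlastD)
    have eq: "trunc (ext s0 l) (length l - 1) = trunc (ext s0 (butlast l)) (length l - 1)"
      unfolding trunc_eq_iff
    proof (intro allI impI)
      fix k :: nat assume k: "1 \<le> k \<and> k \<le> length l - 1"
      have k2: "k - 1 < length (butlast l)" using k by (simp; arith)
      have k3: "k \<le> length (butlast l)" using k by simp
      have k4: "k \<le> length l" using k by (simp; arith)
      show "ext s0 l k = ext s0 (butlast l) k"
        using k k3 k4 nth_butlast[OF k2] unfolding ext_def by simp
    qed
    have "butlast (Psi n S s0 F l) = take (length l - 1 + n) (trunc (F (ext s0 l)) (length l + n))"
    proof -
      have "length l + n - 1 = length l - 1 + n" using l by (cases l) auto
      then show ?thesis using l by (simp add: Psi_def butlast_conv_take)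
    qed
    also have "\<dots> = trunc (F (ext s0 l)) (length l - 1 + n)"
      by (rule trunc_take[symmetric]) simp
    also have "\<dots> = trunc (F (ext s0 (butlast l))) (length l - 1 + n)"
      using Hs_caus[OF F ext_Strm[OF s0 l(1)] ext_Strm[OF s0 bl] eq] .
    also have "\<dots> = Psi n S s0 F (butlast l)" using bl by (simp add: Psi_def)
    finally show ?thesis .
  qed
  have C: "length (Psi n S s0 F l) = length l + n" if "l \<in> lists S" for l
    using that by (simp add: Psi_def)
  have D: "Psi n S s0 F l = undefined" if "l \<notin> lists S" for l
    using that by (simp add: Psi_def)
  have "Psi n S s0 F \<in> lists S \<rightarrow>\<^sub>E lists T" using A D by (intro PiE_I) auto
  then show ?thesis unfolding Hist_def
  proof (rule CollectI[of _ "Psi n S s0 F", OF conjI], intro conjI ballI impI)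
    fix l assume "l \<in> lists S" then show "length (Psi n S s0 F l) = length l + n" by (rule C)
  next
    fix l assume "l \<in> lists S" "l \<noteq> []" then show "butlast (Psi n S s0 F l) = Psi n S s0 F (butlast l)" by (rule B)
  qed
qed

lemma Psi_Phi:
  assumes f: "f \<in> Hist n S T" and s0: "s0 \<in> S"
  shows "Psi n S s0 (Phi n S f) = f"
proof
  fix l
  show "Psi n S s0 (Phi n S f) l = f l"
  proof (cases "l \<in> lists S")
    case True
    have "Psi n S s0 (Phi n S f) l = trunc (Phi n S f (ext s0 l)) (length l + n)"
      using True unfolding Psi_def by (rule restrict_apply')
    also have "\<dots> = f (trunc (ext s0 l) (length l))"
      by (rule Phi_trunc[OF f ext_Strm[OF s0 True]])
    also have "\<dots> = f l" by (simp only: trunc_ext)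
    finally show ?thesis .
  next
    case False
    have "f \<in> lists S \<rightarrow>\<^sub>E lists T" using f by (simp add: Hist_def)
    then have "f l = undefined" using False by (rule PiE_arb)
    then show ?thesis using False by (simp add: Psi_def)
  qed
qed

lemma Phi_Psi:
  assumes F: "F \<in> Hist_strm n S T" and s0: "s0 \<in> S"
  shows "Phi n S (Psi n S s0 F) = F"
proof
  fix s
  show "Phi n S (Psi n S s0 F) s = F s"
  proof (cases "s \<in> Strm S")
    case s: True
    show ?thesis
    proof
      fix k
      show "Phi n S (Psi n S s0 F) s k = F s k"
      proof (cases "k \<in> {1..}")
        case True
        have k1: "k - 1 < k + n" using True by simp
        have tl: "trunc s k \<in> lists S" using trunc_lists[OF s] .
        have e: "trunc (ext s0 (trunc s k)) k = trunc s k" using trunc_ext[of s0 "trunc s k"] by simp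
        have c: "trunc (F (ext s0 (trunc s k))) (k + n) = trunc (F s) (k + n)"
          using Hs_caus[OF F ext_Strm[OF s0 tl] s e] .
        have "Phi n S (Psi n S s0 F) s k = Psi n S s0 F (trunc s k) ! (k - 1)"
          using s True unfolding Phi_def by simp
        also have "Psi n S s0 F (trunc s k) = trunc (F (ext s0 (trunc s k))) (length (trunc s k) + n)"
          using tl unfolding Psi_def by (rule restrict_apply')
        also have "\<dots> = trunc (F s) (k + n)" using c by simp
        also have "trunc (F s) (k + n) ! (k - 1) = F s (Suc (k - 1))" using k1 by (rule trunc_nth)
        also have "Suc (k - 1) = k" using True by simp
        finally show ?thesis .
      next
        case False
        have "F s \<in> Strm T" using Hs_Strm[OF F s] .
        then have "F s k = undefined" using False unfolding Strm_def by (rule PiE_arb)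
        moreover have "Phi n S (Psi n S s0 F) s k = undefined" using False s unfolding Phi_def by simp
        ultimately show ?thesis by simp
      qed
    qed
  next
    case False
    then show ?thesis using Hs_ext[OF F False] unfolding Phi_def by simp
  qed
qed

theorem proposition3p9:
  fixes S :: "'a set" and T :: "'b set" and s0 :: 'a and t0 :: 'b and n :: nat
  assumes "s0 \<in> S" and "t0 \<in> T"
  shows "\<exists>\<Phi>. bij_betw \<Phi> (Hist n S T) (Hist_strm n S T)"
proof
  show "bij_betw (Phi n S) (Hist n S T) (Hist_strm n S T)"
  proof (rule bij_betw_byWitness[where f' = "Psi n S s0"])
    show "\<forall>a\<in>Hist n S T. Psi n S s0 (Phi n S a) = a"
    proof
      fix a assume "a \<in> Hist n S T" then show "Psi n S s0 (Phi n S a) = a" by (rule Psi_Phi[OF _ assms(1)])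
    qed
    show "\<forall>a'\<in>Hist_strm n S T. Phi n S (Psi n S s0 a') = a'"
    proof
      fix a assume "a \<in> Hist_strm n S T" then show "Phi n S (Psi n S s0 a) = a" by (rule Phi_Psi[OF _ assms(1)])
    qed
    show "Phi n S ` Hist n S T \<subseteq> Hist_strm n S T"
    proof
      fix x assume "x \<in> Phi n S ` Hist n S T"
      then obtain a where "a \<in> Hist n S T" "x = Phi n S a" by (rule imageE)
      then show "x \<in> Hist_strm n S T" using Phi_in by simp
    qed
    show "Psi n S s0 ` Hist_strm n S T \<subseteq> Hist n S T"
    proof
      fix x assume "x \<in> Psi n S s0 ` Hist_strm n S T"
      then obtain a where "a \<in> Hist_strm n S T" "x = Psi n S s0 a" by (rule imageE)
      then show "x \<in> Hist n S T" using Psi_in[OF _ assms(1)] by simp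
    qed
  qed
qed

end
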